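(* Let $l\ge1$, $L=a^l$ on $\mathcal H=\ell^2(\mathbb N)$ (single jump operator, $H=0$), $Q$ the closure of $L^\dagger L=a^{\dagger l}a^l$, $G=-\tfrac12Q$ and $\Lambda=\mathrm{Id}+a^{l\dagger}a^l$. Then: for every $k\ge0$, $\mathcal H^k=\{\sum_m\psi_m|m\rangle:\sum_m(1+m^{kl})|\psi_m|^2<\infty\}$; $a^{l\dagger}a^l$ with domain $\mathcal H^2$ is self-adjoint; $L\in B(\mathcal H^{m+1},\mathcal H^m)$ for all $m\in\mathbb N$; and for all $u\in\mathcal H^6$, $$2\mathrm{Re}\langle\Lambda^2Gu|\Lambda^2u\rangle+\|\Lambda^2Lu\|^2\le0 .$$ Consequently Assumption A holds with $\gamma=0$.
   Context: $(|m\rangle)_{m\in\mathbb N}$ is the Fock (canonical) basis of $\ell^2(\mathbb N)$, $a|m+1\rangle=\sqrt{m+1}|m\rangle$, $a|0\rangle=0$, $a^\dagger|m\rangle=\sqrt{m+1}|m+1\rangle$. For $\Lambda\ge\mathrm{Id}$ self-adjoint, $\mathcal H^n=\mathcal D(\Lambda^{n/2})$ with norm $\|\Lambda^{n/2}u\|$, $B(\mathcal H^m,\mathcal H^n)$ the bounded operators between them. Assumption A (no Hamiltonian): jump operators $L_j$ closed; $\bigcap_j\mathcal D(L_j^\dagger L_j)$ dense and $\sum_jL_j^\dagger L_j$ essentially self-adjoint on it with closure $Q$; $G=-\tfrac12Q$; $\Lambda=Q+\mathrm{Id}$; $L_j\in B(\mathcal H^5,\mathcal H^4)$; and there is $\gamma\ge0$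 with $2\mathrm{Re}\langle\Lambda^2Gu|\Lambda^2u\rangle+\sum_j\|\Lambda^2L_ju\|^2\le\gamma\|\Lambda^2u\|^2$ for all $u\in\mathcal H^6$. *)

theory Defs
  imports "HOL-Analysis.Analysis"
begin

text \<open>A vector of l2(N) is represented by its coefficient sequence in the Fock
basis: u = sum_m u(m) |m>.\<close>

type_synonym vec = "nat \<Rightarrow> complex"

type_synonym op = "vec set \<times> (vec \<Rightarrow> vec)"

abbreviation op_dom :: "op \<Rightarrow> vec set" where "op_dom T \<equiv> fst T"
abbreviation op_app :: "op \<Rightarrow> vec \<Rightarrow> vec" where "op_app T \<equiv> snd T"

definition l2 :: "vec set" where
  "l2 = {u. summable (\<lambda>m. (cmod (u m))\<^sup>2)}"

text \<open>Inner product, antilinear in the first argument.\<close>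
definition inner2 :: "vec \<Rightarrow> vec \<Rightarrow> complex" where
  "inner2 u v = (\<Sum>m. cnj (u m) * v m)"

definition nrm :: "vec \<Rightarrow> real" where
  "nrm u = sqrt (\<Sum>m. (cmod (u m))\<^sup>2)"

definition vdiff :: "vec \<Rightarrow> vec \<Rightarrow> vec" where
  "vdiff u v = (\<lambda>m. u m - v m)"

definition l2conv :: "(nat \<Rightarrow> vec) \<Rightarrow> vec \<Rightarrow> bool" where
  "l2conv x u \<longleftrightarrow> u \<in> l2 \<and> (\<forall>k. x k \<in> l2) \<and> (\<lambda>k. nrm (vdiff (x k) u)) \<longlonglongrightarrow> 0"

definition dense_l2 :: "vec set \<Rightarrow> bool" where
  "dense_l2 D \<longleftrightarrow> D \<subseteq> l2 \<and> (\<forall>u\<in>l2. \<exists>x. (\<forall>k. x k \<in> D) \<and> l2conv x u)"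

definition op_id :: op where "op_id = (l2, id)"

definition op_comp :: "op \<Rightarrow> op \<Rightarrow> op" where
  "op_comp S T = ({u \<in> op_dom T. op_app T u \<in> op_dom S}, op_app S \<circ> op_app T)"

primrec opow :: "op \<Rightarrow> nat \<Rightarrow> op" where
  "opow T 0 = op_id"
| "opow T (Suc n) = op_comp T (opow T n)"

definition op_add :: "op \<Rightarrow> op \<Rightarrow> op" where
  "op_add S T = (op_dom S \<inter> op_dom T, \<lambda>u m. op_app S u m + op_app T u m)"

definition op_scale :: "complex \<Rightarrow> op \<Rightarrow> op" where
  "op_scale c T = (op_dom T, \<lambda>u m. c * op_app T u m)"

definition op_sum :: "op list \<Rightarrow> op" where
  "op_sum Ts = (l2 \<inter> (\<Inter>T\<in>set Ts. op_dom T), \<lambda>u m. (\<Sum>T\<leftarrow>Ts. op_app T u m))"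

definition closed_op :: "op \<Rightarrow> bool" where
  "closed_op T \<longleftrightarrow> op_dom T \<subseteq> l2 \<and>
     (\<forall>x u w. (\<forall>k. x k \<in> op_dom T) \<longrightarrow> l2conv x u \<longrightarrow> l2conv (\<lambda>k. op_app T (x k)) w
        \<longrightarrow> u \<in> op_dom T \<and> op_app T u = w)"

text \<open>Closure of an operator (via the closure of its graph).\<close>
definition op_closure :: "op \<Rightarrow> op" where
  "op_closure T =
    ({u. \<exists>x w. (\<forall>k. x k \<in> op_dom T) \<and> l2conv x u \<and> l2conv (\<lambda>k. op_app T (x k)) w},
     \<lambda>u. THE w. \<exists>x. (\<forall>k. x k \<in> op_dom T) \<and> l2conv x u \<and> l2conv (\<lambda>k. op_app T (x k)) w)"

definition adjoint :: "op \<Rightarrow> op" where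
  "adjoint T =
    ({v \<in> l2. \<exists>w\<in>l2. \<forall>u\<in>op_dom T. inner2 (op_app T u) v = inner2 u w},
     \<lambda>v. THE w. w \<in> l2 \<and> (\<forall>u\<in>op_dom T. inner2 (op_app T u) v = inner2 u w))"

definition op_eq :: "op \<Rightarrow> op \<Rightarrow> bool" where
  "op_eq S T \<longleftrightarrow> op_dom S = op_dom T \<and> (\<forall>u\<in>op_dom S. op_app S u = op_app T u)"

definition selfadjoint :: "op \<Rightarrow> bool" where
  "selfadjoint T \<longleftrightarrow> dense_l2 (op_dom T) \<and> op_eq (adjoint T) T"

definition ess_selfadjoint :: "op \<Rightarrow> bool" where
  "ess_selfadjoint T \<longleftrightarrow> dense_l2 (op_dom T) \<and> selfadjoint (op_closure T)"

definition ann :: op where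
  "ann = ({u \<in> l2. (\<lambda>m. complex_of_real (sqrt (real m + 1)) * u (Suc m)) \<in> l2},
          \<lambda>u m. complex_of_real (sqrt (real m + 1)) * u (Suc m))"

definition cre :: op where
  "cre = ({u \<in> l2. (\<lambda>m. if m = 0 then 0 else complex_of_real (sqrt (real m)) * u (m - 1)) \<in> l2},
          \<lambda>u m. if m = 0 then 0 else complex_of_real (sqrt (real m)) * u (m - 1))"

section \<open>Fractional scale H^n = D(Lambda^(n/2)) for Lambda >= Id self-adjoint\<close>

text \<open>D(A^(1/2)) is the closure of D(A) for the form norm u \<mapsto> sqrt(Re <Au|u>),
  and ||A^(1/2) u|| is the limit of the form norms along approximating sequences.\<close>

definition form_approx :: "op \<Rightarrow> (nat \<Rightarrow> vec) \<Rightarrow> vec \<Rightarrow> bool" where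
  "form_approx A x u \<longleftrightarrow> (\<forall>k. x k \<in> op_dom A) \<and> l2conv x u \<and>
     (\<forall>e>0. \<exists>N. \<forall>i\<ge>N. \<forall>j\<ge>N.
        Re (inner2 (op_app A (vdiff (x i) (x j))) (vdiff (x i) (x j))) < e\<^sup>2)"

definition formdom :: "op \<Rightarrow> vec set" where
  "formdom A = {u. \<exists>x. form_approx A x u}"

definition formnorm :: "op \<Rightarrow> vec \<Rightarrow> real" where
  "formnorm A u = (THE r. \<forall>x. form_approx A x u \<longrightarrow>
      (\<lambda>k. sqrt (Re (inner2 (op_app A (x k)) (x k)))) \<longlonglongrightarrow> r)"

definition hdom :: "op \<Rightarrow> nat \<Rightarrow> vec set" where
  "hdom A n = (if even n then op_dom (opow A (n div 2))
     else {u \<in> op_dom (opow A (n div 2)). op_app (opow A (n div 2)) u \<in> formdom A})"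

definition hnorm :: "op \<Rightarrow> nat \<Rightarrow> vec \<Rightarrow> real" where
  "hnorm A n u = (if even n then nrm (op_app (opow A (n div 2)) u)
     else formnorm A (op_app (opow A (n div 2)) u))"

definition bounded_between :: "op \<Rightarrow> nat \<Rightarrow> nat \<Rightarrow> op \<Rightarrow> bool" where
  "bounded_between A m n T \<longleftrightarrow> hdom A m \<subseteq> op_dom T \<and>
     (\<forall>u\<in>hdom A m. op_app T u \<in> hdom A n) \<and>
     (\<exists>C. \<forall>u\<in>hdom A m. hnorm A n (op_app T u) \<le> C * hnorm A m u)"

section \<open>Assumption A (no Hamiltonian), for a finite family of jump operators\<close>

definition assumptionA :: "op list \<Rightarrow> real \<Rightarrow> bool" where
  "assumptionA Ls \<gamma> \<longleftrightarrow>
    (let LL = op_sum (map (\<lambda>L. op_comp (adjoint L) L) Ls);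
         Q = op_closure LL;
         G = op_scale (-1/2) Q;
         Lam = op_add op_id Q
     in (\<forall>L\<in>set Ls. closed_op L) \<and>
        dense_l2 (op_dom LL) \<and>
        ess_selfadjoint LL \<and>
        (\<forall>L\<in>set Ls. bounded_between Lam 5 4 L) \<and>
        \<gamma> \<ge> 0 \<and>
        (\<forall>u\<in>hdom Lam 6.
           2 * Re (inner2 (op_app (opow Lam 2) (op_app G u)) (op_app (opow Lam 2) u))
           + (\<Sum>L\<leftarrow>Ls. (nrm (op_app (opow Lam 2) (op_app L u)))\<^sup>2)
           \<le> \<gamma> * (nrm (op_app (opow Lam 2) u))\<^sup>2))"

end

theory Submission
  imports Defs "HOL-Analysis.Analysis"
begin


definition qf :: "nat \<Rightarrow> nat \<Rightarrow> real" where "qf l n = (\<Prod>i<l. real (n - i))"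
definition lam :: "nat \<Rightarrow> nat \<Rightarrow> real" where "lam l n = 1 + qf l n"
definition Wd :: "(nat \<Rightarrow> real) \<Rightarrow> vec set" where
  "Wd w = {u. summable (\<lambda>n. w n * (cmod (u n))\<^sup>2)}"
definition En :: "(nat \<Rightarrow> real) \<Rightarrow> vec \<Rightarrow> real" where
  "En w u = (\<Sum>n. w n * (cmod (u n))\<^sup>2)"
definition mulv :: "(nat \<Rightarrow> real) \<Rightarrow> vec \<Rightarrow> vec" where
  "mulv d u = (\<lambda>n. complex_of_real (d n) * u n)"
definition trunc :: "nat \<Rightarrow> vec \<Rightarrow> vec" where
  "trunc k u = (\<lambda>n. if n < k then u n else 0)"
definition evec :: "nat \<Rightarrow> vec" where "evec k = (\<lambda>n. if n = k then 1 else 0)"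

lemma qf_nonneg: "0 \<le> qf l n" unfolding qf_def by (simp add: prod_nonneg)
lemma qf_zero: "n < l \<Longrightarrow> qf l n = 0" unfolding qf_def
  by (rule prod_zero) auto
lemma qf_0 [simp]: "qf 0 n = 1" unfolding qf_def by simp
lemma qf_Suc: "qf (Suc j) N = qf j N * real (N - j)" unfolding qf_def by simp
lemma qf_shift: "qf (Suc j) (Suc n) = real (Suc n) * qf j n"
  unfolding qf_def by (subst prod.lessThan_Suc_shift) simp
lemma qf_le_pow: "qf j n \<le> real n ^ j" unfolding qf_def
  using prod_mono[of "{..<j}" "\<lambda>i. real (n - i)" "\<lambda>i. real n"] by simp
lemma qf_mono: "n \<le> n' \<Longrightarrow> qf j n \<le> qf j n'" unfolding qf_def
  by (rule prod_mono) auto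
lemma qf_le_next: "qf j n \<le> real j ^ j + qf (Suc j) n"
proof (cases "n \<le> j")
  case True
  have "qf j n \<le> real n ^ j" by (rule qf_le_pow)
  also have "\<dots> \<le> real j ^ j" using True by (simp add: power_mono)
  finally show ?thesis using qf_nonneg[of "Suc j" n] by linarith
next
  case False
  have "qf j n * 1 \<le> qf j n * real (n - j)"
    by (rule mult_left_mono) (use False qf_nonneg in auto)
  moreover have "0 \<le> real j ^ j" by simp
  ultimately show ?thesis unfolding qf_Suc by linarith
qed
lemma qf_lower: assumes "2 * l \<le> n" shows "(real n / 2) ^ l \<le> qf l n"
proof -
  have "(\<Prod>i<l. real n / 2) \<le> qf l n" unfolding qf_def
  proof (rule prod_mono)
    fix i assume "i \<in> {..<l}"
    then have "i < l" by simp
    then have "real (n - i) = real n - real i" using assms by simp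
    then show "0 \<le> real n / 2 \<and> real n / 2 \<le> real (n - i)" using \<open>i<l\<close> assms by auto
  qed
  then show ?thesis by simp
qed
lemma pow_le_qf: "real n ^ l \<le> 2 ^ l * qf l n + real (2*l) ^ l"
proof (cases "2 * l \<le> n")
  case True
  have "real n ^ l = 2 ^ l * (real n / 2) ^ l" by (simp add: power_divide)
  also have "\<dots> \<le> 2 ^ l * qf l n" using qf_lower[OF True] by simp
  moreover have "0 \<le> real (2*l) ^ l" by simp
  ultimately show ?thesis by linarith
next
  case False
  then have "real n ^ l \<le> real (2*l) ^ l" by (intro power_mono) auto
  moreover have "0 \<le> 2 ^ l * qf l n" using qf_nonneg[of l n] by simp
  ultimately show ?thesis by linarith
qed
lemma lam_ge1: "1 \<le> lam l n" unfolding lam_def using qf_nonneg by simp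
lemma lam_pos: "0 < lam l n" using lam_ge1[of l n] by simp
lemma qf_le_lam: "qf l n \<le> lam l n" unfolding lam_def by simp
lemma lam_mono: "n \<le> n' \<Longrightarrow> lam l n \<le> lam l n'" unfolding lam_def using qf_mono by simp

lemma lam_pow_upper: "lam l n ^ k \<le> 2 ^ k * (1 + real n ^ (k * l))"
proof -
  have "lam l n \<le> 1 + real n ^ l" unfolding lam_def using qf_le_pow by simp
  then have a: "lam l n ^ k \<le> (1 + real n ^ l) ^ k" using lam_pos[of l n] by (intro power_mono) auto
  have b: "(1 + x) ^ k \<le> 2 ^ k * (1 + x ^ k)" if "0 \<le> x" for x :: real
  proof (cases "x \<le> 1")
    case True
    then have "(1 + x) ^ k \<le> 2 ^ k" by (intro power_mono) (use that in auto)
    moreover have "(2::real) ^ k * 1 \<le> 2 ^ k * (1 + x ^ k)" using that by (intro mult_left_mono) auto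
    ultimately show ?thesis by linarith
  next
    case False
    then have "(1 + x) ^ k \<le> (2 * x) ^ k" by (intro power_mono) (use that in auto)
    moreover have "(2 * x) ^ k = 2 ^ k * x ^ k" by (simp add: power_mult_distrib)
    moreover have "(2::real) ^ k * x ^ k \<le> 2 ^ k * (1 + x ^ k)" by (intro mult_left_mono) auto
    ultimately show ?thesis by linarith
  qed
  have "(real n ^ l) ^ k = real n ^ (k * l)" by (simp only: mult.commute[of k l] power_mult)
  then show ?thesis using a b[of "real n ^ l"] by simp
qed


lemma lam_pow_lower: "1 + real n ^ (k * l) \<le> 2 * (2 ^ l + real (2*l) ^ l) ^ k * lam l n ^ k"
proof -
  define c where "c = real (2*l) ^ l"
  define K where "K = (2 ^ l + c :: real)"
  have c0: "0 \<le> c" unfolding c_def by simp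
  have K1: "1 \<le> K" unfolding K_def using one_le_power[of "2::real" l] c0 by linarith
  have "real n ^ l \<le> K * lam l n"
  proof -
    have "real n ^ l \<le> 2 ^ l * qf l n + c" unfolding c_def by (rule pow_le_qf)
    also have "\<dots> \<le> 2 ^ l * lam l n + c * lam l n"
    proof (rule add_mono)
      show "2 ^ l * qf l n \<le> 2 ^ l * lam l n" using qf_le_lam[of l n] by simp
      show "c \<le> c * lam l n" using mult_left_mono[OF lam_ge1[of l n] c0] by simp
    qed
    also have "\<dots> = K * lam l n" unfolding K_def by (rule distrib_right[symmetric])
    finally show ?thesis .
  qed
  then have "(real n ^ l) ^ k \<le> (K * lam l n) ^ k"
    by (rule power_mono) simp
  also have "\<dots> = K ^ k * lam l n ^ k" by (rule power_mult_distrib)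
  finally have c: "(real n ^ l) ^ k \<le> K ^ k * lam l n ^ k" .
  have e: "(real n ^ l) ^ k = real n ^ (k * l)" by (simp only: mult.commute[of k l] power_mult)
  have "1 * 1 \<le> K ^ k * lam l n ^ k"
    by (rule mult_mono) (use K1 lam_ge1[of l n] in auto)
  then have "1 + real n ^ (k * l) \<le> 2 * (K ^ k * lam l n ^ k)" using c e by linarith
  then show ?thesis unfolding K_def c_def by simp
qed



lemma l2_iff: "u \<in> l2 \<longleftrightarrow> summable (\<lambda>n. (cmod (u n))\<^sup>2)" unfolding l2_def by simp
lemma Wd_iff: "u \<in> Wd w \<longleftrightarrow> summable (\<lambda>n. w n * (cmod (u n))\<^sup>2)" unfolding Wd_def by simp
lemma Wd_one: "Wd (\<lambda>_. 1) = l2" unfolding Wd_def l2_def by simp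

lemma cmod_mulv: "(cmod (mulv d u n))\<^sup>2 = (d n)\<^sup>2 * (cmod (u n))\<^sup>2"
  unfolding mulv_def by (simp add: norm_mult power_mult_distrib)

lemma mulv_Wd: "mulv d u \<in> Wd w \<longleftrightarrow> u \<in> Wd (\<lambda>n. w n * (d n)\<^sup>2)"
  unfolding Wd_iff cmod_mulv by (simp add: mult.assoc)
lemma mulv_l2: "mulv d u \<in> l2 \<longleftrightarrow> u \<in> Wd (\<lambda>n. (d n)\<^sup>2)"
  using mulv_Wd[of d u "\<lambda>_. 1"] Wd_one by simp

lemma Wd_mono2:
  assumes "\<And>n. 0 \<le> w n" "\<And>n. w n \<le> C * w1 n + D * w2 n" "u \<in> Wd w1" "u \<in> Wd w2"
  shows "u \<in> Wd w"
proof -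
  have "summable (\<lambda>n. C * (w1 n * (cmod (u n))\<^sup>2) + D * (w2 n * (cmod (u n))\<^sup>2))"
    using assms(3,4) unfolding Wd_iff by (intro summable_add summable_mult)
  then show ?thesis unfolding Wd_iff
  proof (rule summable_comparison_test'[where N=0])
    fix n
    have "w n * (cmod (u n))\<^sup>2 \<le> (C * w1 n + D * w2 n) * (cmod (u n))\<^sup>2"
      by (rule mult_right_mono) (use assms(2) in auto)
    then show "norm (w n * (cmod (u n))\<^sup>2) \<le> C * (w1 n * (cmod (u n))\<^sup>2) + D * (w2 n * (cmod (u n))\<^sup>2)"
      using assms(1)[of n] by (simp add: algebra_simps)
  qed
qed

lemma Wd_mono:
  assumes "\<And>n. 0 \<le> w n" "\<And>n. w n \<le> C * w1 n" "u \<in> Wd w1"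
  shows "u \<in> Wd w"
  using Wd_mono2[of w C w1 0 w1 u] assms by simp

lemma sq_add_le: "(cmod (a + b))\<^sup>2 \<le> 2 * (cmod a)\<^sup>2 + 2 * (cmod b)\<^sup>2"
proof -
  have "cmod (a + b) \<le> cmod a + cmod b" by (rule norm_triangle_ineq)
  then have "(cmod (a + b))\<^sup>2 \<le> (cmod a + cmod b)\<^sup>2" by (intro power_mono) auto
  also have "\<dots> \<le> 2 * (cmod a)\<^sup>2 + 2 * (cmod b)\<^sup>2"
  proof -
    have "0 \<le> (cmod a - cmod b)\<^sup>2" by simp
    then show ?thesis unfolding power2_diff power2_sum by linarith
  qed
  finally show ?thesis .
qed

lemma Wd_add:
  assumes w: "\<And>n. 0 \<le> w n" and "u \<in> Wd w" "v \<in> Wd w"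
  shows "(\<lambda>n. u n + v n) \<in> Wd w"
proof -
  have "summable (\<lambda>n. 2 * (w n * (cmod (u n))\<^sup>2) + 2 * (w n * (cmod (v n))\<^sup>2))"
    using assms(2,3) unfolding Wd_iff by (intro summable_add summable_mult)
  then show ?thesis unfolding Wd_iff
  proof (rule summable_comparison_test'[where N=0])
    fix n
    have "w n * (cmod (u n + v n))\<^sup>2 \<le> w n * (2 * (cmod (u n))\<^sup>2 + 2 * (cmod (v n))\<^sup>2)"
      by (rule mult_left_mono[OF sq_add_le w])
    then show "norm (w n * (cmod (u n + v n))\<^sup>2) \<le> 2 * (w n * (cmod (u n))\<^sup>2) + 2 * (w n * (cmod (v n))\<^sup>2)"
      using w[of n] by (simp add: algebra_simps)
  qed
qed

lemma Wd_scale: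
  assumes "u \<in> Wd w" shows "(\<lambda>n. c * u n) \<in> Wd w"
proof -
  have "summable (\<lambda>n. (cmod c)\<^sup>2 * (w n * (cmod (u n))\<^sup>2))"
    using assms unfolding Wd_iff by (rule summable_mult)
  then show ?thesis unfolding Wd_iff by (simp add: norm_mult power_mult_distrib algebra_simps)
qed

lemma Wd_diff:
  assumes w: "\<And>n. 0 \<le> w n" and "u \<in> Wd w" "v \<in> Wd w"
  shows "vdiff u v \<in> Wd w"
proof -
  have "(\<lambda>n. (-1) * v n) \<in> Wd w" using assms(3) by (rule Wd_scale)
  from Wd_add[OF w assms(2) this] show ?thesis unfolding vdiff_def by simp
qed

lemma l2_add: "u \<in> l2 \<Longrightarrow> v \<in> l2 \<Longrightarrow> (\<lambda>n. u n + v n) \<in> l2"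
  using Wd_add[of "\<lambda>_. 1" u v] Wd_one by simp
lemma l2_diff: "u \<in> l2 \<Longrightarrow> v \<in> l2 \<Longrightarrow> vdiff u v \<in> l2"
  using Wd_diff[of "\<lambda>_. 1" u v] Wd_one by simp

lemma summable_fin: "(\<And>n. n \<ge> N \<Longrightarrow> f n = 0) \<Longrightarrow> summable (f :: nat \<Rightarrow> 'a::real_normed_vector)"
proof -
  assume h: "\<And>n. n \<ge> N \<Longrightarrow> f n = 0"
  have "f = (\<lambda>n. if n \<in> {..<N} then f n else 0)" using h by (auto simp: fun_eq_iff not_less)
  moreover have "summable (\<lambda>n. if n \<in> {..<N} then f n else 0)" by (rule summable_If_finite_set) simp
  ultimately show ?thesis by simp
qed

lemma Wd_fin: "(\<And>n. n \<ge> N \<Longrightarrow> u n = 0) \<Longrightarrow> u \<in> Wd w"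
  unfolding Wd_iff by (rule summable_fin[of N]) simp

lemma l2_fin: "(\<And>n. n \<ge> N \<Longrightarrow> u n = 0) \<Longrightarrow> u \<in> l2"
  using Wd_fin[of N u "\<lambda>_. 1"] Wd_one by simp

lemma trunc_fin: "n \<ge> k \<Longrightarrow> trunc k u n = 0" unfolding trunc_def by simp
lemma evec_fin: "n \<ge> Suc k \<Longrightarrow> evec k n = 0" unfolding evec_def by simp


lemma En_nonneg: "(\<And>n. 0 \<le> w n) \<Longrightarrow> u \<in> Wd w \<Longrightarrow> 0 \<le> En w u"
  unfolding En_def Wd_iff by (rule suminf_nonneg) auto

lemma partial_le_En: "(\<And>n. 0 \<le> w n) \<Longrightarrow> u \<in> Wd w \<Longrightarrow>
    (\<Sum>n<M. w n * (cmod (u n))\<^sup>2) \<le> En w u"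
  unfolding En_def Wd_iff by (rule sum_le_suminf) auto

lemma En_le_const:
  assumes "(\<And>n. 0 \<le> w n)" "\<And>M. (\<Sum>n<M. w n * (cmod (u n))\<^sup>2) \<le> B"
  shows "u \<in> Wd w" "En w u \<le> B"
proof -
  show s: "u \<in> Wd w" unfolding Wd_iff by (rule summableI_nonneg_bounded[where x=B]) (use assms in auto)
  show "En w u \<le> B" unfolding En_def using s unfolding Wd_iff by (rule suminf_le_const) (use assms in auto)
qed


lemma nrm_En: "nrm u = sqrt (En (\<lambda>_. 1) u)" unfolding nrm_def En_def by simp

lemma coord_le_nrm:
  assumes "u \<in> l2" shows "cmod (u n) \<le> nrm u"
proof -
  have "(cmod (u n))\<^sup>2 \<le> (\<Sum>m. (cmod (u m))\<^sup>2)"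
    using sum_le_suminf[of "\<lambda>m. (cmod (u m))\<^sup>2" "{n}"] assms unfolding l2_iff by auto
  then show ?thesis unfolding nrm_def by (simp add: real_le_rsqrt)
qed

lemma l2conv_coord:
  assumes "l2conv x u" shows "(\<lambda>k. x k n) \<longlonglongrightarrow> u n"
proof -
  have h: "u \<in> l2" "\<And>k. x k \<in> l2" "(\<lambda>k. nrm (vdiff (x k) u)) \<longlonglongrightarrow> 0"
    using assms unfolding l2conv_def by auto
  have "(\<lambda>k. x k n - u n) \<longlonglongrightarrow> 0"
  proof (rule Lim_null_comparison[OF _ h(3)])
    show "\<forall>\<^sub>F k in sequentially. norm (x k n - u n) \<le> nrm (vdiff (x k) u)"
      using coord_le_nrm[OF l2_diff[OF h(2) h(1)], of _ n] by (simp add: vdiff_def)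
  qed
  then show ?thesis by (simp add: LIM_zero_iff)
qed


lemma tail_tendsto:
  fixes f :: "nat \<Rightarrow> real"
  assumes "summable f"
  shows "(\<lambda>k. \<Sum>n. if n < k then 0 else f n) \<longlonglongrightarrow> 0"
proof -
  have eq: "(\<Sum>n. if n < k then 0 else f n) = suminf f - sum f {..<k}" for k
  proof -
    define g where "g n = (if n < k then f n else 0)" for n
    have e1: "(\<lambda>n. if n < k then 0 else f n) = (\<lambda>n. f n - g n)" unfolding g_def by auto
    have s2: "summable g" unfolding g_def by (rule summable_fin[of k]) auto
    have e2: "suminf g = sum f {..<k}" unfolding g_def
      by (subst suminf_finite[of "{..<k}"]) auto
    show ?thesis unfolding e1 suminf_diff[OF assms s2, symmetric] e2 ..
  qed
  have "(\<lambda>k. suminf f - sum f {..<k}) \<longlonglongrightarrow> suminf f - suminf f"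
    by (intro tendsto_diff tendsto_const summable_LIMSEQ assms)
  then show ?thesis unfolding eq by simp
qed

lemma trunc_l2conv:
  assumes u: "u \<in> l2" shows "l2conv (\<lambda>k. trunc k u) u"
  unfolding l2conv_def
proof (intro conjI allI)
  show "u \<in> l2" by fact
  show "trunc k u \<in> l2" for k using l2_fin[of k] trunc_fin by blast
  have eq: "nrm (vdiff (trunc k u) u) = sqrt (\<Sum>n. if n < k then 0 else (cmod (u n))\<^sup>2)" for k
    unfolding nrm_def vdiff_def trunc_def by (rule arg_cong[where f=sqrt], rule arg_cong[where f=suminf]) auto
  have "(\<lambda>k. sqrt (\<Sum>n. if n < k then 0 else (cmod (u n))\<^sup>2)) \<longlonglongrightarrow> sqrt 0"
    by (intro tendsto_real_sqrt tail_tendsto) (use u in \<open>simp add: l2_iff\<close>)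
  then show "(\<lambda>k. nrm (vdiff (trunc k u) u)) \<longlonglongrightarrow> 0" unfolding eq by simp
qed


lemma l2_prod_summable:
  assumes "u \<in> l2" "v \<in> l2" shows "summable (\<lambda>n. cnj (u n) * v n)"
proof (rule summable_norm_cancel)
  have "summable (\<lambda>n. (cmod (u n))\<^sup>2 + (cmod (v n))\<^sup>2)"
    using assms unfolding l2_iff by (rule summable_add)
  then show "summable (\<lambda>n. norm (cnj (u n) * v n))"
  proof (rule summable_comparison_test'[where N=0])
    fix n
    have "cmod (u n) * cmod (v n) \<le> (cmod (u n))\<^sup>2 + (cmod (v n))\<^sup>2"
    proof -
      have "2 * (cmod (u n) * cmod (v n)) \<le> (cmod (u n))\<^sup>2 + (cmod (v n))\<^sup>2"
        using sum_squares_bound[of "cmod (u n)" "cmod (v n)"] by (simp add: mult.assoc)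
      moreover have "0 \<le> cmod (u n) * cmod (v n)" by simp
      ultimately show ?thesis by linarith
    qed
    then show "norm (norm (cnj (u n) * v n)) \<le> (cmod (u n))\<^sup>2 + (cmod (v n))\<^sup>2"
      by (simp add: norm_mult)
  qed
qed

lemma inner2_evec: "inner2 (evec k) w = w k"
proof -
  have "(\<lambda>m. cnj (evec k m) * w m) = (\<lambda>m. if m = k then w m else 0)"
    unfolding evec_def by auto
  then show ?thesis unfolding inner2_def using sums_unique[OF sums_single[of k w]] by simp
qed

lemma En_tri:
  assumes w: "\<And>n. 0 \<le> w n" and a: "a \<in> Wd w" and b: "b \<in> Wd w"
  shows "sqrt (En w (\<lambda>n. a n + b n)) \<le> sqrt (En w a) + sqrt (En w b)"
proof -
  define B where "B = (sqrt (En w a) + sqrt (En w b))\<^sup>2"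
  have bnd: "(\<Sum>n<M. w n * (cmod (a n + b n))\<^sup>2) \<le> B" for M
  proof -
    define f where "f n = sqrt (w n) * cmod (a n)" for n
    define g where "g n = sqrt (w n) * cmod (b n)" for n
    define h where "h n = sqrt (w n) * cmod (a n + b n)" for n
    have "L2_set h {..<M} \<le> L2_set (\<lambda>n. f n + g n) {..<M}"
    proof (rule L2_set_mono)
      fix n show "h n \<le> f n + g n" unfolding h_def f_def g_def
        by (simp add: distrib_left[symmetric]) (rule mult_left_mono[OF norm_triangle_ineq]; simp add: w)
      show "0 \<le> h n" unfolding h_def using w[of n] by simp
    qed
    also have "\<dots> \<le> L2_set f {..<M} + L2_set g {..<M}" by (rule L2_set_triangle_ineq)
    also have "L2_set f {..<M} \<le> sqrt (En w a)" unfolding L2_set_def f_def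
      using partial_le_En[OF w a, of M] w by (simp add: power_mult_distrib)
    also have "L2_set g {..<M} \<le> sqrt (En w b)" unfolding L2_set_def g_def
      using partial_le_En[OF w b, of M] w by (simp add: power_mult_distrib)
    finally have le: "L2_set h {..<M} \<le> sqrt (En w a) + sqrt (En w b)" by simp
    have "L2_set h {..<M} = sqrt (\<Sum>n<M. w n * (cmod (a n + b n))\<^sup>2)"
      unfolding L2_set_def h_def using w by (simp add: power_mult_distrib)
    then have "(\<Sum>n<M. w n * (cmod (a n + b n))\<^sup>2) = (L2_set h {..<M})\<^sup>2"
      using w by (simp add: sum_nonneg)
    also have "\<dots> \<le> B" unfolding B_def
      by (rule power_mono[OF le]) (simp add: L2_set_def sum_nonneg)
    finally show ?thesis .
  qed
  have "En w (\<lambda>n. a n + b n) \<le> B" by (rule En_le_const(2)[where w=w, OF w bnd])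
  then have "sqrt (En w (\<lambda>n. a n + b n)) \<le> sqrt B" by simp
  also have "sqrt B = sqrt (En w a) + sqrt (En w b)" unfolding B_def
    by (simp add: En_nonneg[OF w a] En_nonneg[OF w b])
  finally show ?thesis .
qed




lemma opow_0_dom: "op_dom (opow T 0) = l2" by (simp add: op_id_def)
lemma opow_0_app: "op_app (opow T 0) u = u" by (simp add: op_id_def)
lemma opow_Suc_app: "op_app (opow T (Suc j)) u = op_app T (op_app (opow T j) u)"
  by (simp add: op_comp_def)
lemma opow_Suc_dom: "op_dom (opow T (Suc j)) = {u \<in> op_dom (opow T j). op_app (opow T j) u \<in> op_dom T}"
  by (simp add: op_comp_def)

lemma ann_app: "op_app (opow ann j) u = (\<lambda>m. complex_of_real (sqrt (qf j (m + j))) * u (m + j))"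
proof (induction j)
  case 0 then show ?case by (simp add: op_id_def)
next
  case (Suc j)
  show ?case
  proof (rule ext)
    fix m
    have q: "qf (Suc j) (m + Suc j) = real (Suc m) * qf j (Suc m + j)"
      by (simp add: qf_Suc)
    have "op_app (opow ann (Suc j)) u m = complex_of_real (sqrt (real m + 1)) *
        (complex_of_real (sqrt (qf j (Suc m + j))) * u (Suc m + j))"
      unfolding opow_Suc_app Suc by (simp add: ann_def)
    also have "\<dots> = complex_of_real (sqrt (qf (Suc j) (m + Suc j))) * u (m + Suc j)"
      unfolding q real_sqrt_mult of_real_mult by simp
    finally show "op_app (opow ann (Suc j)) u m = complex_of_real (sqrt (qf (Suc j) (m + Suc j))) * u (m + Suc j)" .
  qed
qed

lemma cre_app: "op_app (opow cre j) v = (\<lambda>n. if n < j then 0 else complex_of_real (sqrt (qf j n)) * v (n - j))"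
proof (induction j)
  case 0 then show ?case by (simp add: op_id_def)
next
  case (Suc j)
  show ?case
  proof (rule ext)
    fix n
    show "op_app (opow cre (Suc j)) v n = (if n < Suc j then 0 else complex_of_real (sqrt (qf (Suc j) n)) * v (n - Suc j))"
    proof (cases n)
      case 0 then show ?thesis unfolding opow_Suc_app by (simp add: cre_def)
    next
      case (Suc n')
      then show ?thesis unfolding opow_Suc_app Suc.IH
        by (simp add: cre_def qf_shift real_sqrt_mult)
    qed
  qed
qed

lemma creann_app: "op_app (op_comp (opow cre l) (opow ann l)) u = mulv (qf l) u"
proof (rule ext)
  fix n
  show "op_app (op_comp (opow cre l) (opow ann l)) u n = mulv (qf l) u n"
  proof (cases "n < l")
    case True then show ?thesis by (simp add: op_comp_def cre_app mulv_def qf_zero)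
  next
    case False
    then have "n - l + l = n" by simp
    then show ?thesis using False qf_nonneg[of l n]
      by (simp add: op_comp_def cre_app ann_app mulv_def mult.assoc[symmetric] of_real_mult[symmetric])
  qed
qed

lemma cmod_ann: "(cmod (op_app (opow ann j) u m))\<^sup>2 = qf j (m + j) * (cmod (u (m + j)))\<^sup>2"
  unfolding ann_app using qf_nonneg[of j "m+j"] by (simp add: norm_mult power_mult_distrib)

lemma ann_l2: "op_app (opow ann j) u \<in> l2 \<longleftrightarrow> u \<in> Wd (qf j)"
  unfolding l2_iff cmod_ann Wd_iff
  using summable_iff_shift[of "\<lambda>n. qf j n * (cmod (u n))\<^sup>2" j] by simp

lemma ann_dom: "op_dom (opow ann j) = {u \<in> l2. u \<in> Wd (qf j)}"
proof (induction j)
  case 0 then show ?case using Wd_one by (simp add: op_id_def)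
next
  case (Suc j)
  have ad: "op_dom ann = {v \<in> l2. op_app ann v \<in> l2}" by (simp add: ann_def)
  have imp: "u \<in> Wd (qf j)" if "u \<in> l2" "u \<in> Wd (qf (Suc j))" for u
    by (rule Wd_mono2[of "qf j" "real j ^ j" "\<lambda>_. 1" 1 "qf (Suc j)" u])
       (use that qf_nonneg qf_le_next Wd_one in auto)
  show ?case unfolding opow_Suc_dom Suc ad
    using ann_l2[of j] ann_l2[of "Suc j"] imp unfolding opow_Suc_app by blast
qed



definition Dd :: "(nat \<Rightarrow> real) \<Rightarrow> vec set" where "Dd d = {u \<in> l2. mulv d u \<in> l2}"

lemma le_1_sq: "(x::real) \<le> 1 + x\<^sup>2"
proof (cases "x \<le> 1")
  case True then show ?thesis using zero_le_power2[of x] by linarith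
next
  case False
  then have "x * 1 \<le> x * x" by (intro mult_left_mono) auto
  then show ?thesis by (simp add: power2_eq_square)
qed

lemma evec_l2: "evec k \<in> l2" using l2_fin[of "Suc k"] evec_fin by blast
lemma evec_Wd: "evec k \<in> Wd w" using Wd_fin[of "Suc k"] evec_fin by blast
lemma evec_Dd: "evec k \<in> Dd d"
  unfolding Dd_def using evec_l2 l2_fin[of "Suc k" "mulv d (evec k)"]
  by (auto simp: mulv_def evec_def)
lemma trunc_Dd: "trunc k u \<in> Dd d"
  unfolding Dd_def using l2_fin[of k "trunc k u"] l2_fin[of k "mulv d (trunc k u)"]
  by (auto simp: mulv_def trunc_def)

lemma l2conv_const: "u \<in> l2 \<Longrightarrow> l2conv (\<lambda>k. u) u"
proof -
  assume "u \<in> l2"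
  moreover have "nrm (vdiff u u) = 0" unfolding nrm_def vdiff_def by simp
  ultimately show ?thesis unfolding l2conv_def by simp
qed

lemma l2conv_l2: "l2conv x u \<Longrightarrow> u \<in> l2" "l2conv x u \<Longrightarrow> x k \<in> l2"
  unfolding l2conv_def by auto

section \<open>adjoint of a^l\<close>

lemma adj_inner:
  assumes u: "u \<in> op_dom (opow ann l)" and v: "v \<in> l2" and cv: "op_app (opow cre l) v \<in> l2"
  shows "inner2 (op_app (opow ann l) u) v = inner2 u (op_app (opow cre l) v)"
proof -
  define f where "f n = cnj (u n) * op_app (opow cre l) v n" for n
  have ul2: "u \<in> l2" using u ann_dom by auto
  have sf: "summable f" unfolding f_def by (rule l2_prod_summable[OF ul2 cv])
  have z: "sum f {..<l} = 0" unfolding f_def cre_app by simp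
  have "inner2 u (op_app (opow cre l) v) = suminf f" unfolding inner2_def f_def ..
  also have "\<dots> = (\<Sum>n. f (n + l))" using suminf_split_initial_segment[OF sf, of l] z by simp
  also have "\<dots> = inner2 (op_app (opow ann l) u) v" unfolding inner2_def f_def cre_app ann_app
    by (simp add: mult.commute mult.left_commute)
  finally show ?thesis ..
qed

lemma ann_evec: "op_app (opow ann l) (evec k) m = (if m + l = k then complex_of_real (sqrt (qf l k)) else 0)"
  unfolding ann_app evec_def by auto

lemma adj_unique:
  assumes h: "\<forall>u\<in>op_dom (opow ann l). inner2 (op_app (opow ann l) u) v = inner2 u w"
  shows "w = op_app (opow cre l) v"
proof (rule ext)
  fix k
  have ek: "evec k \<in> op_dom (opow ann l)" unfolding ann_dom using evec_l2 evec_Wd by blast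
  define c where "c = op_app (opow cre l) v k"
  have fe: "(\<lambda>m. cnj (op_app (opow ann l) (evec k) m) * v m) = (\<lambda>m. if m = k - l then c else 0)"
  proof (rule ext)
    fix m
    show "cnj (op_app (opow ann l) (evec k) m) * v m = (if m = k - l then c else 0)"
    proof (cases "m = k - l")
      case True
      show ?thesis
      proof (cases "k < l")
        case True then show ?thesis using \<open>m = k - l\<close> unfolding ann_evec c_def cre_app by simp
      next
        case False then show ?thesis using \<open>m = k - l\<close> unfolding ann_evec c_def cre_app by simp
      qed
    next
      case False
      then have "m + l \<noteq> k" by auto
      then show ?thesis using False unfolding ann_evec by simp
    qed
  qed
  have "inner2 (op_app (opow ann l) (evec k)) v = c"
    unfolding inner2_def fe using sums_unique[OF sums_single[of "k - l" "\<lambda>_. c"]] by simp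
  moreover have "inner2 (evec k) w = w k" by (rule inner2_evec)
  ultimately show "w k = op_app (opow cre l) v k" using h ek unfolding c_def by simp
qed

lemma adjL_dom: "op_dom (adjoint (opow ann l)) = {v \<in> l2. op_app (opow cre l) v \<in> l2}"
proof -
  have "(\<exists>w\<in>l2. \<forall>u\<in>op_dom (opow ann l). inner2 (op_app (opow ann l) u) v = inner2 u w)
      \<longleftrightarrow> op_app (opow cre l) v \<in> l2" if "v \<in> l2" for v
  proof
    assume "\<exists>w\<in>l2. \<forall>u\<in>op_dom (opow ann l). inner2 (op_app (opow ann l) u) v = inner2 u w"
    then obtain w where "w \<in> l2" "\<forall>u\<in>op_dom (opow ann l). inner2 (op_app (opow ann l) u) v = inner2 u w" by blast
    then show "op_app (opow cre l) v \<in> l2" using adj_unique[of l v w] by simp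
  next
    assume "op_app (opow cre l) v \<in> l2"
    then show "\<exists>w\<in>l2. \<forall>u\<in>op_dom (opow ann l). inner2 (op_app (opow ann l) u) v = inner2 u w"
      using adj_inner[OF _ that] by blast
  qed
  then show ?thesis unfolding adjoint_def by auto
qed

lemma adjL_app: "v \<in> l2 \<Longrightarrow> op_app (opow cre l) v \<in> l2 \<Longrightarrow>
   op_app (adjoint (opow ann l)) v = op_app (opow cre l) v"
  unfolding adjoint_def
  by (simp, rule the_equality) (use adj_inner adj_unique in auto)

lemma Dd_q_Wd: "u \<in> Dd (qf l) \<Longrightarrow> u \<in> Wd (qf l)"
  unfolding Dd_def mulv_l2
  by (rule Wd_mono2[of "qf l" 1 "\<lambda>_. 1" 1 "\<lambda>n. (qf l n)\<^sup>2" u]) (use qf_nonneg le_1_sq Wd_one in auto)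

lemma LL_dom: "op_dom (op_comp (adjoint (opow ann l)) (opow ann l)) = Dd (qf l)"
proof -
  have "op_dom (op_comp (adjoint (opow ann l)) (opow ann l)) =
     {u \<in> op_dom (opow ann l). op_app (opow ann l) u \<in> {v \<in> l2. op_app (opow cre l) v \<in> l2}}"
    unfolding op_comp_def adjL_dom by simp
  also have "\<dots> = Dd (qf l)"
    using ann_l2[of l] creann_app[of l] Dd_q_Wd[of _ l] unfolding ann_dom Dd_def op_comp_def
    by auto
  finally show ?thesis .
qed

lemma LL_app: "u \<in> Dd (qf l) \<Longrightarrow> op_app (op_comp (adjoint (opow ann l)) (opow ann l)) u = mulv (qf l) u"
proof -
  assume u: "u \<in> Dd (qf l)"
  then have a: "op_app (opow ann l) u \<in> l2" using ann_l2 Dd_q_Wd by blast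
  have b: "op_app (opow cre l) (op_app (opow ann l) u) \<in> l2"
    using u creann_app[of l u] unfolding Dd_def op_comp_def by auto
  show ?thesis using adjL_app[OF a b] creann_app[of l u] by (simp add: op_comp_def)
qed

section \<open>closedness of a^l\<close>

lemma closedL: "closed_op (opow ann l)"
  unfolding closed_op_def
proof (intro conjI allI impI)
  show "op_dom (opow ann l) \<subseteq> l2" unfolding ann_dom by auto
  fix x u w
  assume x: "\<forall>k. x k \<in> op_dom (opow ann l)" and c1: "l2conv x u"
    and c2: "l2conv (\<lambda>k. op_app (opow ann l) (x k)) w"
  have w: "w = op_app (opow ann l) u"
  proof (rule ext)
    fix m
    have "(\<lambda>k. op_app (opow ann l) (x k) m) \<longlonglongrightarrow> w m" by (rule l2conv_coord[OF c2])
    moreover have "(\<lambda>k. op_app (opow ann l) (x k) m) \<longlonglongrightarrow> op_app (opow ann l) u m"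
      unfolding ann_app by (intro tendsto_mult tendsto_const l2conv_coord[OF c1])
    ultimately show "w m = op_app (opow ann l) u m" by (rule LIMSEQ_unique)
  qed
  have "w \<in> l2" using l2conv_l2(1)[OF c2] .
  then have "u \<in> Wd (qf l)" using w ann_l2 by blast
  then show "u \<in> op_dom (opow ann l)" unfolding ann_dom using l2conv_l2(1)[OF c1] by blast
  show "op_app (opow ann l) u = w" using w ..
qed

section \<open>diagonal operators\<close>

lemma diag_coord:
  assumes T: "\<forall>u\<in>op_dom T. op_app T u = mulv d u"
    and x: "\<forall>k. x k \<in> op_dom T" and c1: "l2conv x u" and c2: "l2conv (\<lambda>k. op_app T (x k)) w"
  shows "w = mulv d u"
proof (rule ext)
  fix n
  have "(\<lambda>k. op_app T (x k) n) \<longlonglongrightarrow> w n" by (rule l2conv_coord[OF c2])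
  moreover have "(\<lambda>k. op_app T (x k) n) = (\<lambda>k. complex_of_real (d n) * x k n)"
    using T x by (simp add: mulv_def)
  moreover have "(\<lambda>k. complex_of_real (d n) * x k n) \<longlonglongrightarrow> mulv d u n"
    unfolding mulv_def by (intro tendsto_mult tendsto_const l2conv_coord[OF c1])
  ultimately show "w n = mulv d u n" using LIMSEQ_unique by metis
qed

lemma closure_diag:
  assumes D: "op_dom T = Dd d" and T: "\<forall>u\<in>op_dom T. op_app T u = mulv d u"
  shows "op_dom (op_closure T) = Dd d" "\<forall>u\<in>Dd d. op_app (op_closure T) u = mulv d u"
proof -
  have ex: "(\<forall>k. (\<lambda>k. u) k \<in> op_dom T) \<and> l2conv (\<lambda>k. u) u \<and> l2conv (\<lambda>k. op_app T ((\<lambda>k. u) k)) (mulv d u)"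
    if "u \<in> Dd d" for u
    using that D T l2conv_const unfolding Dd_def by auto
  show "op_dom (op_closure T) = Dd d"
  proof
    show "op_dom (op_closure T) \<subseteq> Dd d"
    proof
      fix u assume "u \<in> op_dom (op_closure T)"
      then obtain x w where h: "\<forall>k. x k \<in> op_dom T" "l2conv x u" "l2conv (\<lambda>k. op_app T (x k)) w"
        unfolding op_closure_def by auto
      have "w = mulv d u" by (rule diag_coord[OF T h])
      then show "u \<in> Dd d" unfolding Dd_def using l2conv_l2(1)[OF h(2)] l2conv_l2(1)[OF h(3)] by auto
    qed
    show "Dd d \<subseteq> op_dom (op_closure T)"
    proof
      fix u assume "u \<in> Dd d"
      from ex[OF this] show "u \<in> op_dom (op_closure T)" unfolding op_closure_def fst_conv
        by (intro CollectI exI[of _ "\<lambda>k. u"] exI[of _ "mulv d u"]) simp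
    qed
  qed
  show "\<forall>u\<in>Dd d. op_app (op_closure T) u = mulv d u"
  proof
    fix u assume u: "u \<in> Dd d"
    show "op_app (op_closure T) u = mulv d u" unfolding op_closure_def snd_conv
    proof (rule the_equality)
      show "\<exists>x. (\<forall>k. x k \<in> op_dom T) \<and> l2conv x u \<and> l2conv (\<lambda>k. op_app T (x k)) (mulv d u)"
        using ex[OF u] by (intro exI[of _ "\<lambda>k. u"]) simp
      show "w = mulv d u" if "\<exists>x. (\<forall>k. x k \<in> op_dom T) \<and> l2conv x u \<and> l2conv (\<lambda>k. op_app T (x k)) w" for w
        using that diag_coord[OF T] by blast
    qed
  qed
qed

lemma diag_inner: "inner2 (mulv d u) v = inner2 u (mulv d v)"
  unfolding inner2_def mulv_def by (simp add: mult.commute mult.left_commute)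

lemma diag_unique:
  assumes h: "\<forall>u\<in>Dd d. inner2 (mulv d u) v = inner2 u w"
  shows "w = mulv d v"
proof (rule ext)
  fix k
  have "(\<lambda>m. cnj (mulv d (evec k) m) * v m) = (\<lambda>m. if m = k then mulv d v m else 0)"
    unfolding mulv_def evec_def by auto
  then have "inner2 (mulv d (evec k)) v = mulv d v k"
    unfolding inner2_def using sums_unique[OF sums_single[of k "mulv d v"]] by simp
  then show "w k = mulv d v k" using h evec_Dd[of k d] inner2_evec[of k w] by simp
qed




lemma selfadjoint_diag:
  assumes D: "op_dom T = Dd d" and T: "\<forall>u\<in>op_dom T. op_app T u = mulv d u"
  shows "selfadjoint T"
  unfolding selfadjoint_def
proof
  show "dense_l2 (op_dom T)" unfolding dense_l2_def D
  proof
    show "Dd d \<subseteq> l2" unfolding Dd_def by auto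
    show "\<forall>u\<in>l2. \<exists>x. (\<forall>k. x k \<in> Dd d) \<and> l2conv x u"
    proof
      fix u assume "u \<in> l2"
      then show "\<exists>x. (\<forall>k. x k \<in> Dd d) \<and> l2conv x u"
        using trunc_l2conv[of u] trunc_Dd[of _ u d] by (intro exI[of _ "\<lambda>k. trunc k u"]) simp
    qed
  qed
  have key: "(w \<in> l2 \<and> (\<forall>u\<in>op_dom T. inner2 (op_app T u) v = inner2 u w)) \<longleftrightarrow>
             v \<in> Dd d \<and> w = mulv d v" if v: "v \<in> l2" for v w
  proof
    assume a: "w \<in> l2 \<and> (\<forall>u\<in>op_dom T. inner2 (op_app T u) v = inner2 u w)"
    then have "\<forall>u\<in>Dd d. inner2 (mulv d u) v = inner2 u w" using D T by simp
    then have "w = mulv d v" by (rule diag_unique)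
    then show "v \<in> Dd d \<and> w = mulv d v" using a v unfolding Dd_def by auto
  next
    assume b: "v \<in> Dd d \<and> w = mulv d v"
    have "w \<in> l2" using b unfolding Dd_def by simp
    moreover have "inner2 (op_app T u) v = inner2 u w" if "u \<in> op_dom T" for u
    proof -
      have "op_app T u = mulv d u" using T that by blast
      then show ?thesis using b diag_inner[of d u v] by simp
    qed
    ultimately show "w \<in> l2 \<and> (\<forall>u\<in>op_dom T. inner2 (op_app T u) v = inner2 u w)" by blast
  qed
  have dom: "op_dom (adjoint T) = op_dom T"
  proof -
    have "op_dom (adjoint T) = {v \<in> l2. \<exists>w\<in>l2. \<forall>u\<in>op_dom T. inner2 (op_app T u) v = inner2 u w}"
      unfolding adjoint_def by simp
    also have "\<dots> = Dd d"
    proof (rule set_eqI)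
      fix v
      show "v \<in> {v \<in> l2. \<exists>w\<in>l2. \<forall>u\<in>op_dom T. inner2 (op_app T u) v = inner2 u w} \<longleftrightarrow> v \<in> Dd d"
      proof
        assume "v \<in> {v \<in> l2. \<exists>w\<in>l2. \<forall>u\<in>op_dom T. inner2 (op_app T u) v = inner2 u w}"
        then obtain w where "v \<in> l2" "w \<in> l2" "\<forall>u\<in>op_dom T. inner2 (op_app T u) v = inner2 u w" by blast
        then show "v \<in> Dd d" using key by blast
      next
        assume v: "v \<in> Dd d"
        then have vl: "v \<in> l2" unfolding Dd_def by simp
        have "mulv d v \<in> l2 \<and> (\<forall>u\<in>op_dom T. inner2 (op_app T u) v = inner2 u (mulv d v))"
          using key[OF vl, of "mulv d v"] v by simp
        then show "v \<in> {v \<in> l2. \<exists>w\<in>l2. \<forall>u\<in>op_dom T. inner2 (op_app T u) v = inner2 u w}"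
          using vl by blast
      qed
    qed
    finally show ?thesis using D by simp
  qed
  show "op_eq (adjoint T) T" unfolding op_eq_def
  proof (intro conjI ballI)
    show "op_dom (adjoint T) = op_dom T" by (rule dom)
    fix v assume "v \<in> op_dom (adjoint T)"
    then have v: "v \<in> Dd d" using dom D by simp
    then have vl: "v \<in> l2" unfolding Dd_def by simp
    have "op_app (adjoint T) v = mulv d v" unfolding adjoint_def snd_conv
    proof (rule the_equality)
      show "mulv d v \<in> l2 \<and> (\<forall>u\<in>op_dom T. inner2 (op_app T u) v = inner2 u (mulv d v))"
        using key[OF vl, of "mulv d v"] v by simp
      show "w = mulv d v" if "w \<in> l2 \<and> (\<forall>u\<in>op_dom T. inner2 (op_app T u) v = inner2 u w)" for w
        using key[OF vl, of w] that by simp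
    qed
    then show "op_app (adjoint T) v = op_app T v" using T D v by simp
  qed
qed



lemma mulv_mulv: "mulv a (mulv b u) = mulv (\<lambda>n. a n * b n) u"
  unfolding mulv_def by (simp add: fun_eq_iff mult.assoc)
lemma En_mulv: "En w (mulv d u) = En (\<lambda>n. w n * (d n)\<^sup>2) u"
  unfolding En_def cmod_mulv by (simp add: mult.assoc)
lemma nrm_mulv: "nrm (mulv d u) = sqrt (En (\<lambda>n. (d n)\<^sup>2) u)"
  unfolding nrm_En En_mulv by simp

lemma lam_sq_le: "(lam l n)\<^sup>2 \<le> 2 * 1 + 2 * (qf l n)\<^sup>2"
proof -
  have "(lam l n)\<^sup>2 = 1 + 2 * qf l n + (qf l n)\<^sup>2" unfolding lam_def by (simp add: power2_sum)
  moreover have "2 * qf l n \<le> 1 + (qf l n)\<^sup>2"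
    using sum_squares_bound[of 1 "qf l n"] by simp
  ultimately show ?thesis by linarith
qed

lemma lam_pow_ge1: "1 \<le> lam l n ^ k" using lam_ge1 by simp
lemma lam_pow_nonneg: "0 \<le> lam l n ^ k" using lam_pos[of l n] by simp
lemma lam_pow_mono: "k \<le> k' \<Longrightarrow> lam l n ^ k \<le> lam l n ^ k'"
  using lam_ge1 by (simp add: power_increasing)

lemma W_mono: "k \<le> k' \<Longrightarrow> u \<in> Wd (\<lambda>n. lam l n ^ k') \<Longrightarrow> u \<in> Wd (\<lambda>n. lam l n ^ k)"
  by (rule Wd_mono[of _ 1]) (use lam_pow_nonneg lam_pow_mono in auto)

lemma W_l2: "u \<in> Wd (\<lambda>n. lam l n ^ k) \<Longrightarrow> u \<in> l2"
  using W_mono[of 0 k u l] Wd_one by simp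

lemma Dd_eq_W: "Dd (qf l) = Wd (\<lambda>n. lam l n ^ 2)"
proof (rule set_eqI, rule iffI)
  fix u assume "u \<in> Dd (qf l)"
  then have a: "u \<in> Wd (\<lambda>_. 1)" "u \<in> Wd (\<lambda>n. (qf l n)\<^sup>2)" unfolding Dd_def mulv_l2 Wd_one by auto
  show "u \<in> Wd (\<lambda>n. lam l n ^ 2)"
    by (rule Wd_mono2[of _ 2 "\<lambda>_. 1" 2 "\<lambda>n. (qf l n)\<^sup>2" u]) (use a lam_sq_le in auto)
next
  fix u assume u: "u \<in> Wd (\<lambda>n. lam l n ^ 2)"
  have "u \<in> Wd (\<lambda>n. (qf l n)\<^sup>2)"
    by (rule Wd_mono[of _ 1 "\<lambda>n. lam l n ^ 2"]) (use u qf_nonneg qf_le_lam in \<open>auto intro: power_mono\<close>)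
  then show "u \<in> Dd (qf l)" unfolding Dd_def mulv_l2 using W_l2[OF u] by simp
qed

lemma Dd_sub_W1: "u \<in> Dd (qf l) \<Longrightarrow> u \<in> Wd (lam l)"
  using W_mono[of 1 2 u l] Dd_eq_W by simp

locale QL =
  fixes l :: nat and Q :: op
  assumes Qdom: "op_dom Q = Dd (qf l)"
    and Qapp: "\<forall>v\<in>Dd (qf l). op_app Q v = mulv (qf l) v"
begin

definition "Lam = op_add op_id Q"

lemma Lam_dom: "op_dom Lam = Dd (qf l)"
  unfolding Lam_def op_add_def op_id_def Qdom Dd_def by auto

lemma Lam_app: "v \<in> Dd (qf l) \<Longrightarrow> op_app Lam v = mulv (lam l) v"
  unfolding Lam_def op_add_def op_id_def using Qapp
  by (simp add: mulv_def lam_def fun_eq_iff algebra_simps)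

lemma Lampow: "op_dom (opow Lam j) = Wd (\<lambda>n. lam l n ^ (2*j)) \<and>
    (\<forall>u\<in>Wd (\<lambda>n. lam l n ^ (2*j)). op_app (opow Lam j) u = mulv (\<lambda>n. lam l n ^ j) u)"
proof (induction j)
  case 0
  show ?case using Wd_one by (simp add: op_id_def mulv_def)
next
  case (Suc j)
  have e1: "(\<lambda>n. lam l n ^ 2 * (lam l n ^ j)\<^sup>2) = (\<lambda>n. lam l n ^ (2 * Suc j))"
    by (simp add: fun_eq_iff power_mult[symmetric] power_add[symmetric] mult.commute)
  have dom: "op_dom (opow Lam (Suc j)) = Wd (\<lambda>n. lam l n ^ (2 * Suc j))"
  proof -
    have "op_dom (opow Lam (Suc j)) = {u \<in> Wd (\<lambda>n. lam l n ^ (2*j)). mulv (\<lambda>n. lam l n ^ j) u \<in> Dd (qf l)}"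
      unfolding opow_Suc_dom Lam_dom using Suc.IH by auto
    also have "\<dots> = Wd (\<lambda>n. lam l n ^ (2 * Suc j))"
      unfolding Dd_eq_W mulv_Wd e1 using W_mono[of "2*j" "2 * Suc j" _ l] by auto
    finally show ?thesis .
  qed
  have app: "op_app (opow Lam (Suc j)) u = mulv (\<lambda>n. lam l n ^ Suc j) u"
    if u: "u \<in> Wd (\<lambda>n. lam l n ^ (2 * Suc j))" for u
  proof -
    have u2: "u \<in> Wd (\<lambda>n. lam l n ^ (2*j))" using W_mono[OF _ u, of "2*j"] by simp
    have "mulv (\<lambda>n. lam l n ^ j) u \<in> Dd (qf l)"
      unfolding Dd_eq_W mulv_Wd e1 using u .
    then show ?thesis unfolding opow_Suc_app using Suc.IH u2
      by (simp add: Lam_app mulv_mulv mult.commute)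
  qed
  show ?case using dom app by blast
qed

lemma re_inner: "v \<in> Dd (qf l) \<Longrightarrow> Re (inner2 (op_app Lam v) v) = En (lam l) v"
proof -
  assume v: "v \<in> Dd (qf l)"
  have s: "summable (\<lambda>n. lam l n * (cmod (v n))\<^sup>2)" using Dd_sub_W1[OF v] unfolding Wd_iff .
  have eq: "(\<lambda>n. cnj (op_app Lam v n) * v n) = (\<lambda>n. complex_of_real (lam l n * (cmod (v n))\<^sup>2))"
  proof (rule ext)
    fix n
    have "cnj (op_app Lam v n) * v n = complex_of_real (lam l n) * (v n * cnj (v n))"
      using Lam_app[OF v] by (simp add: mulv_def)
    also have "\<dots> = complex_of_real (lam l n * (cmod (v n))\<^sup>2)"
      by (simp only: complex_norm_square[symmetric] of_real_mult)
    finally show "cnj (op_app Lam v n) * v n = complex_of_real (lam l n * (cmod (v n))\<^sup>2)" .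
  qed
  have "inner2 (op_app Lam v) v = (\<Sum>n. complex_of_real (lam l n * (cmod (v n))\<^sup>2))"
    unfolding inner2_def by (simp only: eq)
  also have "\<dots> = complex_of_real (En (lam l) v)"
    unfolding En_def by (rule suminf_of_real[OF s, symmetric])
  finally have "inner2 (op_app Lam v) v = complex_of_real (En (lam l) v)" .
  then show ?thesis by simp
qed

lemma Dd_diff: "u \<in> Dd (qf l) \<Longrightarrow> v \<in> Dd (qf l) \<Longrightarrow> vdiff u v \<in> Dd (qf l)"
  unfolding Dd_eq_W by (rule Wd_diff) (auto simp: lam_pow_nonneg)

end



lemma En_vdiff_sym: "En w (vdiff u v) = En w (vdiff v u)"
  unfolding En_def vdiff_def by (simp add: norm_minus_commute)

lemma Wd_vdiff_sym: "vdiff u v \<in> Wd w \<Longrightarrow> vdiff v u \<in> Wd w"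
  unfolding Wd_iff vdiff_def by (simp add: norm_minus_commute)

context QL begin

lemma approx_conv:
  assumes fa: "form_approx Lam x u"
  shows "u \<in> Wd (lam l)" "(\<lambda>k. sqrt (En (lam l) (x k))) \<longlonglongrightarrow> sqrt (En (lam l) u)"
proof -
  have xD: "\<And>k. x k \<in> Dd (qf l)" using fa unfolding form_approx_def Lam_dom by blast
  have c: "l2conv x u" using fa unfolding form_approx_def by blast
  have cau: "\<exists>N. \<forall>i\<ge>N. \<forall>j\<ge>N. En (lam l) (vdiff (x i) (x j)) < e\<^sup>2" if e: "e > 0" for e
  proof -
    obtain N where N: "\<forall>i\<ge>N. \<forall>j\<ge>N. Re (inner2 (op_app Lam (vdiff (x i) (x j))) (vdiff (x i) (x j))) < e\<^sup>2"
      using fa e unfolding form_approx_def by blast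
    have "En (lam l) (vdiff (x i) (x j)) = Re (inner2 (op_app Lam (vdiff (x i) (x j))) (vdiff (x i) (x j)))" for i j
      using re_inner[OF Dd_diff[OF xD xD]] by simp
    then show ?thesis using N by auto
  qed
  have w0: "\<And>n. 0 \<le> lam l n" using lam_pos less_imp_le by blast
  have step: "\<exists>N. \<forall>i\<ge>N. vdiff (x i) u \<in> Wd (lam l) \<and> En (lam l) (vdiff (x i) u) \<le> e\<^sup>2"
    if e: "e > 0" for e
  proof -
    obtain N where N: "\<forall>i\<ge>N. \<forall>j\<ge>N. En (lam l) (vdiff (x i) (x j)) < e\<^sup>2" using cau[OF e] by blast
    have "vdiff (x i) u \<in> Wd (lam l) \<and> En (lam l) (vdiff (x i) u) \<le> e\<^sup>2" if i: "i \<ge> N" for i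
    proof -
      have bnd: "(\<Sum>n<M. lam l n * (cmod (vdiff (x i) u n))\<^sup>2) \<le> e\<^sup>2" for M
      proof (rule LIMSEQ_le_const2)
        show "(\<lambda>j. \<Sum>n<M. lam l n * (cmod (vdiff (x i) (x j) n))\<^sup>2) \<longlonglongrightarrow>
              (\<Sum>n<M. lam l n * (cmod (vdiff (x i) u n))\<^sup>2)"
          unfolding vdiff_def
          by (intro tendsto_sum tendsto_mult tendsto_const tendsto_power tendsto_norm tendsto_diff l2conv_coord[OF c])
        show "\<exists>N'. \<forall>j\<ge>N'. (\<Sum>n<M. lam l n * (cmod (vdiff (x i) (x j) n))\<^sup>2) \<le> e\<^sup>2"
        proof (intro exI allI impI)
          fix j assume j: "j \<ge> N"
          have "vdiff (x i) (x j) \<in> Wd (lam l)" using Dd_sub_W1 Dd_diff xD by blast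
          then have "(\<Sum>n<M. lam l n * (cmod (vdiff (x i) (x j) n))\<^sup>2) \<le> En (lam l) (vdiff (x i) (x j))"
            by (rule partial_le_En[OF w0])
          also have "\<dots> < e\<^sup>2" using N i j by blast
          finally show "(\<Sum>n<M. lam l n * (cmod (vdiff (x i) (x j) n))\<^sup>2) \<le> e\<^sup>2" by simp
        qed
      qed
      show ?thesis using En_le_const[where w="lam l", OF w0 bnd] by blast
    qed
    then show ?thesis by blast
  qed
  obtain N1 where N1: "\<forall>i\<ge>N1. vdiff (x i) u \<in> Wd (lam l) \<and> En (lam l) (vdiff (x i) u) \<le> 1\<^sup>2"
    using step[of 1] by auto
  have xN: "x N1 \<in> Wd (lam l)" using Dd_sub_W1 xD by blast
  have "vdiff (x N1) (vdiff (x N1) u) \<in> Wd (lam l)" by (rule Wd_diff[OF w0 xN]) (use N1 in auto)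
  moreover have "vdiff (x N1) (vdiff (x N1) u) = u" unfolding vdiff_def by simp
  ultimately show uW: "u \<in> Wd (lam l)" by simp
  show "(\<lambda>k. sqrt (En (lam l) (x k))) \<longlonglongrightarrow> sqrt (En (lam l) u)"
  proof (rule LIMSEQ_I)
    fix r :: real assume r: "r > 0"
    obtain N where N: "\<forall>i\<ge>N. vdiff (x i) u \<in> Wd (lam l) \<and> En (lam l) (vdiff (x i) u) \<le> (r/2)\<^sup>2"
      using step[of "r/2"] r by auto
    have "norm (sqrt (En (lam l) (x i)) - sqrt (En (lam l) u)) < r" if i: "i \<ge> N" for i
    proof -
      have d: "vdiff (x i) u \<in> Wd (lam l)" "En (lam l) (vdiff (x i) u) \<le> (r/2)\<^sup>2" using N i by auto
      have d': "vdiff u (x i) \<in> Wd (lam l)" using Wd_vdiff_sym[OF d(1)] .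
      have xi: "x i \<in> Wd (lam l)" using Dd_sub_W1 xD by blast
      have sd: "sqrt (En (lam l) (vdiff (x i) u)) \<le> r/2"
      proof -
        have "sqrt (En (lam l) (vdiff (x i) u)) \<le> sqrt ((r/2)\<^sup>2)" using d(2) by (rule real_sqrt_le_mono)
        moreover have "sqrt ((r/2)\<^sup>2) = r/2" using r by simp
        ultimately show ?thesis by simp
      qed
      have t1: "sqrt (En (lam l) (x i)) \<le> sqrt (En (lam l) (vdiff (x i) u)) + sqrt (En (lam l) u)"
        using En_tri[OF w0 d(1) uW] unfolding vdiff_def by simp
      have t2: "sqrt (En (lam l) u) \<le> sqrt (En (lam l) (vdiff u (x i))) + sqrt (En (lam l) (x i))"
        using En_tri[OF w0 d' xi] unfolding vdiff_def by simp
      have "En (lam l) (vdiff u (x i)) = En (lam l) (vdiff (x i) u)" by (rule En_vdiff_sym)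
      then have "\<bar>sqrt (En (lam l) (x i)) - sqrt (En (lam l) u)\<bar> \<le> r/2" using t1 t2 sd
        unfolding abs_le_iff by (simp only:) linarith
      then show ?thesis using r by simp
    qed
    then show "\<exists>N. \<forall>n\<ge>N. norm (sqrt (En (lam l) (x n)) - sqrt (En (lam l) u)) < r" by blast
  qed
qed


lemma tail_summable: "summable (f::nat\<Rightarrow>real) \<Longrightarrow> (\<And>n. 0 \<le> f n) \<Longrightarrow> summable (\<lambda>n. if n < N then 0 else f n)"
  by (rule summable_comparison_test'[where g=f and N=0]) auto

lemma form_exists:
  assumes u: "u \<in> Wd (lam l)" shows "form_approx Lam (\<lambda>k. trunc k u) u"
  unfolding form_approx_def
proof (intro conjI allI impI)
  have w0: "\<And>n. 0 \<le> lam l n" using lam_pos less_imp_le by blast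
  show "trunc k u \<in> op_dom Lam" for k unfolding Lam_dom by (rule trunc_Dd)
  have ul: "u \<in> l2" using W_l2[of u l 1] u by simp
  show "l2conv (\<lambda>k. trunc k u) u" by (rule trunc_l2conv[OF ul])
  fix e :: real assume e: "e > 0"
  define f where "f n = lam l n * (cmod (u n))\<^sup>2" for n
  have sf: "summable f" using u unfolding f_def Wd_iff .
  have f0: "\<And>n. 0 \<le> f n" unfolding f_def using w0 by simp
  have "(\<lambda>k. \<Sum>n. if n < k then 0 else f n) \<longlonglongrightarrow> 0" by (rule tail_tendsto[OF sf])
  then obtain N where N: "\<forall>k\<ge>N. norm ((\<Sum>n. if n < k then 0 else f n) - 0) < e\<^sup>2"
    using LIMSEQ_D[of _ 0 "e\<^sup>2"] e by fastforce
  have "Re (inner2 (op_app Lam (vdiff (trunc i u) (trunc j u))) (vdiff (trunc i u) (trunc j u))) < e\<^sup>2"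
    if "i \<ge> N" "j \<ge> N" for i j
  proof -
    have dD: "vdiff (trunc i u) (trunc j u) \<in> Dd (qf l)" by (rule Dd_diff[OF trunc_Dd trunc_Dd])
    have "En (lam l) (vdiff (trunc i u) (trunc j u)) \<le> (\<Sum>n. if n < N then 0 else f n)"
      unfolding En_def
    proof (rule suminf_le)
      fix n
      show "lam l n * (cmod (vdiff (trunc i u) (trunc j u) n))\<^sup>2 \<le> (if n < N then 0 else f n)"
        using that w0[of n] unfolding vdiff_def trunc_def f_def by auto
      show "summable (\<lambda>n. lam l n * (cmod (vdiff (trunc i u) (trunc j u) n))\<^sup>2)"
        using Dd_sub_W1[OF dD] unfolding Wd_iff .
      show "summable (\<lambda>n. if n < N then 0 else f n)" by (rule tail_summable[OF sf f0])
    qed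
    also have "\<dots> < e\<^sup>2"
    proof -
      have "0 \<le> (\<Sum>n. if n < N then 0 else f n)"
        by (rule suminf_nonneg[OF tail_summable[OF sf f0]]) (use f0 in auto)
      then show ?thesis using N by auto
    qed
    finally show ?thesis using re_inner[OF dD] by simp
  qed
  then show "\<exists>N. \<forall>i\<ge>N. \<forall>j\<ge>N. Re (inner2 (op_app Lam (vdiff (trunc i u) (trunc j u))) (vdiff (trunc i u) (trunc j u))) < e\<^sup>2"
    by blast
qed

lemma formdom_eq: "formdom Lam = Wd (lam l)"
  unfolding formdom_def using approx_conv(1) form_exists by blast

lemma formnorm_eq:
  assumes u: "u \<in> Wd (lam l)" shows "formnorm Lam u = sqrt (En (lam l) u)"
  unfolding formnorm_def
proof (rule the_equality)
  have eq: "(\<lambda>k. sqrt (Re (inner2 (op_app Lam (x k)) (x k)))) = (\<lambda>k. sqrt (En (lam l) (x k)))"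
    if "form_approx Lam x u" for x
    using that re_inner unfolding form_approx_def Lam_dom by auto
  show "\<forall>x. form_approx Lam x u \<longrightarrow> (\<lambda>k. sqrt (Re (inner2 (op_app Lam (x k)) (x k)))) \<longlonglongrightarrow> sqrt (En (lam l) u)"
    using approx_conv(2) eq by auto
  fix r assume "\<forall>x. form_approx Lam x u \<longrightarrow> (\<lambda>k. sqrt (Re (inner2 (op_app Lam (x k)) (x k)))) \<longlonglongrightarrow> r"
  then have "(\<lambda>k. sqrt (En (lam l) (trunc k u))) \<longlonglongrightarrow> r" using form_exists[OF u] eq[OF form_exists[OF u]] by auto
  moreover have "(\<lambda>k. sqrt (En (lam l) (trunc k u))) \<longlonglongrightarrow> sqrt (En (lam l) u)"
    using approx_conv(2)[OF form_exists[OF u]] .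
  ultimately show "r = sqrt (En (lam l) u)" using LIMSEQ_unique by blast
qed

lemma pw2: "(x::real) ^ (2 * j) = (x ^ j)\<^sup>2"
  by (metis power_mult mult.commute)
lemma pw3: "(x::real) * (x ^ j)\<^sup>2 = x ^ Suc (2 * j)"
  by (simp add: pw2)

lemma hdom_char: "hdom Lam k = Wd (\<lambda>n. lam l n ^ k) \<and>
   (\<forall>u\<in>Wd (\<lambda>n. lam l n ^ k). hnorm Lam k u = sqrt (En (\<lambda>n. lam l n ^ k) u))"
proof (cases "even k")
  case True
  then obtain j where k: "k = 2 * j" by (rule evenE)
  have "hdom Lam k = Wd (\<lambda>n. lam l n ^ k)" unfolding hdom_def k using Lampow[of j] by simp
  moreover have "hnorm Lam k u = sqrt (En (\<lambda>n. lam l n ^ k) u)" if "u \<in> Wd (\<lambda>n. lam l n ^ k)" for u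
  proof -
    have "hnorm Lam k u = nrm (mulv (\<lambda>n. lam l n ^ j) u)" unfolding hnorm_def k using Lampow[of j] that k by simp
    also have "\<dots> = sqrt (En (\<lambda>n. lam l n ^ k) u)" unfolding nrm_mulv k pw2 ..
    finally show ?thesis .
  qed
  ultimately show ?thesis by blast
next
  case False
  define j where "j = k div 2"
  have k: "k = Suc (2 * j)" unfolding j_def using False odd_two_times_div_two_succ[of k] by simp
  have kd: "k div 2 = j" unfolding j_def ..
  have e1: "(\<lambda>n. lam l n * (lam l n ^ j)\<^sup>2) = (\<lambda>n. lam l n ^ k)"
    unfolding k pw3 ..
  have "hdom Lam k = {u \<in> Wd (\<lambda>n. lam l n ^ (2*j)). mulv (\<lambda>n. lam l n ^ j) u \<in> Wd (lam l)}"
  proof -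
    have "hdom Lam k = {u \<in> Wd (\<lambda>n. lam l n ^ (2*j)). op_app (opow Lam j) u \<in> Wd (lam l)}"
      unfolding hdom_def kd using False Lampow[of j] formdom_eq by simp
    also have "\<dots> = {u \<in> Wd (\<lambda>n. lam l n ^ (2*j)). mulv (\<lambda>n. lam l n ^ j) u \<in> Wd (lam l)}"
      using Lampow[of j] by (intro Collect_cong conj_cong refl) simp
    finally show ?thesis .
  qed
  also have "\<dots> = Wd (\<lambda>n. lam l n ^ k)"
  proof -
    have "2 * j \<le> k" using k by simp
    then show ?thesis unfolding mulv_Wd e1 using W_mono[of "2*j" k _ l] by blast
  qed
  finally have hd: "hdom Lam k = Wd (\<lambda>n. lam l n ^ k)" .
  moreover have "hnorm Lam k u = sqrt (En (\<lambda>n. lam l n ^ k) u)" if u: "u \<in> Wd (\<lambda>n. lam l n ^ k)" for u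
  proof -
    have u2: "u \<in> Wd (\<lambda>n. lam l n ^ (2*j))" by (rule W_mono[OF _ u]) (simp add: k)
    have mW: "mulv (\<lambda>n. lam l n ^ j) u \<in> Wd (lam l)" unfolding mulv_Wd e1 by (rule u)
    have "hnorm Lam k u = formnorm Lam (mulv (\<lambda>n. lam l n ^ j) u)"
      unfolding hnorm_def kd using False Lampow[of j] u2 by simp
    also have "\<dots> = sqrt (En (\<lambda>n. lam l n ^ k) u)" unfolding formnorm_eq[OF mW] En_mulv e1 ..
    finally show ?thesis .
  qed
  ultimately show ?thesis by blast
qed

end



lemma W_weight: "Wd (\<lambda>n. lam l n ^ k) = {\<psi>. summable (\<lambda>m. (1 + real m ^ (k * l)) * (cmod (\<psi> m))\<^sup>2)}"
proof -
  have "Wd (\<lambda>n. lam l n ^ k) = Wd (\<lambda>m. 1 + real m ^ (k * l))"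
  proof (rule set_eqI, rule iffI)
    fix u assume "u \<in> Wd (\<lambda>n. lam l n ^ k)"
    then show "u \<in> Wd (\<lambda>m. 1 + real m ^ (k * l))"
      by (rule Wd_mono[of _ "2 * (2 ^ l + real (2*l) ^ l) ^ k", rotated 2])
         (use lam_pow_lower in \<open>auto simp: add_nonneg_nonneg\<close>)
  next
    fix u assume "u \<in> Wd (\<lambda>m. 1 + real m ^ (k * l))"
    then show "u \<in> Wd (\<lambda>n. lam l n ^ k)"
      by (rule Wd_mono[of _ "2 ^ k", rotated 2]) (use lam_pow_upper lam_pow_nonneg in auto)
  qed
  then show ?thesis unfolding Wd_def by simp
qed

lemma shiftL:
  fixes w :: "nat \<Rightarrow> real"
  assumes w0: "\<And>n. 0 \<le> w n" and wm: "\<And>n n'. n \<le> n' \<Longrightarrow> w n \<le> w n'"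
    and u: "u \<in> Wd (\<lambda>n. w n * qf l n)"
  shows "op_app (opow ann l) u \<in> Wd w" "En w (op_app (opow ann l) u) \<le> En (\<lambda>n. w n * qf l n) u"
proof -
  define f where "f n = w n * qf l n * (cmod (u n))\<^sup>2" for n
  have sf: "summable f" using u unfolding f_def Wd_iff .
  have f0: "0 \<le> f n" for n unfolding f_def using w0 qf_nonneg by simp
  have sg: "summable (\<lambda>j. f (j + l))" using sf summable_iff_shift by blast
  have le: "w j * (cmod (op_app (opow ann l) u j))\<^sup>2 \<le> f (j + l)" for j
  proof -
    have "w j * (cmod (op_app (opow ann l) u j))\<^sup>2 = w j * (qf l (j + l) * (cmod (u (j + l)))\<^sup>2)"
      unfolding cmod_ann ..
    also have "\<dots> \<le> w (j + l) * (qf l (j + l) * (cmod (u (j + l)))\<^sup>2)"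
      by (rule mult_right_mono) (use wm qf_nonneg in auto)
    finally show ?thesis unfolding f_def by (simp add: mult.assoc)
  qed
  have s1: "summable (\<lambda>j. w j * (cmod (op_app (opow ann l) u j))\<^sup>2)"
    by (rule summable_comparison_test'[OF sg, where N=0]) (use le w0 in auto)
  then show "op_app (opow ann l) u \<in> Wd w" unfolding Wd_iff .
  have "En w (op_app (opow ann l) u) \<le> (\<Sum>j. f (j + l))"
    unfolding En_def by (rule suminf_le[OF le s1 sg])
  also have "\<dots> = suminf f - sum f {..<l}" by (rule suminf_minus_initial_segment[OF sf])
  also have "\<dots> \<le> suminf f" using sum_nonneg[of "{..<l}" f] f0 by simp
  also have "suminf f = En (\<lambda>n. w n * qf l n) u" unfolding f_def En_def ..
  finally show "En w (op_app (opow ann l) u) \<le> En (\<lambda>n. w n * qf l n) u" .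
qed

lemma En_mono:
  assumes "\<And>n. w n \<le> w' n" "u \<in> Wd w" "u \<in> Wd w'"
  shows "En w u \<le> En w' u"
  unfolding En_def by (rule suminf_le) (use assms in \<open>auto simp: Wd_iff intro: mult_right_mono\<close>)

lemma re_inner_mulv:
  assumes "summable (\<lambda>n. a n * b n * (cmod (u n))\<^sup>2)"
  shows "Re (inner2 (mulv a u) (mulv b u)) = (\<Sum>n. a n * b n * (cmod (u n))\<^sup>2)"
proof -
  have eq: "(\<lambda>n. cnj (mulv a u n) * mulv b u n) = (\<lambda>n. complex_of_real (a n * b n * (cmod (u n))\<^sup>2))"
  proof (rule ext)
    fix n
    have "cnj (mulv a u n) * mulv b u n = complex_of_real (a n * b n) * (u n * cnj (u n))"
      by (simp add: mulv_def)
    also have "\<dots> = complex_of_real (a n * b n * (cmod (u n))\<^sup>2)"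
      by (simp only: complex_norm_square[symmetric] of_real_mult)
    finally show "cnj (mulv a u n) * mulv b u n = complex_of_real (a n * b n * (cmod (u n))\<^sup>2)" .
  qed
  have "inner2 (mulv a u) (mulv b u) = (\<Sum>n. complex_of_real (a n * b n * (cmod (u n))\<^sup>2))"
    unfolding inner2_def by (simp only: eq)
  also have "\<dots> = complex_of_real (\<Sum>n. a n * b n * (cmod (u n))\<^sup>2)"
    by (rule suminf_of_real[OF assms, symmetric])
  finally show ?thesis by simp
qed

lemma lamq_le: "lam l n ^ m * qf l n \<le> lam l n ^ (m+1)"
proof -
  have "lam l n ^ m * qf l n \<le> lam l n ^ m * lam l n" by (rule mult_left_mono[OF qf_le_lam lam_pow_nonneg])
  then show ?thesis by (simp add: mult.commute)
qed

context QL begin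

lemma bounded_L: "bounded_between Lam (m + 1) m (opow ann l)"
  unfolding bounded_between_def
proof (intro conjI ballI exI)
  have hm: "hdom Lam m = Wd (\<lambda>n. lam l n ^ m)" using hdom_char by blast
  have hm1: "hdom Lam (m+1) = Wd (\<lambda>n. lam l n ^ (m+1))" using hdom_char by blast
  have wq: "u \<in> Wd (\<lambda>n. lam l n ^ m * qf l n)" if "u \<in> Wd (\<lambda>n. lam l n ^ (m+1))" for u
  proof (rule Wd_mono[OF _ _ that, of _ 1])
    fix n
    show "0 \<le> lam l n ^ m * qf l n" using lam_pow_nonneg qf_nonneg by simp
    have "lam l n ^ m * qf l n \<le> lam l n ^ m * lam l n" by (rule mult_left_mono[OF qf_le_lam lam_pow_nonneg])
    then show "lam l n ^ m * qf l n \<le> 1 * lam l n ^ (m + 1)" by (simp add: mult.commute)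
  qed
  show "hdom Lam (m + 1) \<subseteq> op_dom (opow ann l)"
  proof
    fix u assume u: "u \<in> hdom Lam (m + 1)"
    then have u': "u \<in> Wd (\<lambda>n. lam l n ^ (m+1))" using hm1 by simp
    have "u \<in> Wd (qf l)"
      by (rule Wd_mono[OF _ _ u', of _ 1]) (use qf_nonneg qf_le_lam lam_pow_mono[of 1 "m+1" l] in \<open>auto intro: order_trans[OF qf_le_lam]\<close>)
    then show "u \<in> op_dom (opow ann l)" unfolding ann_dom using W_l2[OF u'] by simp
  qed
  have wm: "\<And>n n'. n \<le> n' \<Longrightarrow> lam l n ^ m \<le> lam l n' ^ m"
    using lam_mono lam_pos by (simp add: power_mono less_imp_le)
  fix u assume u: "u \<in> hdom Lam (m + 1)"
  then have u': "u \<in> Wd (\<lambda>n. lam l n ^ (m+1))" using hm1 by simp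
  note sL = shiftL[OF lam_pow_nonneg wm wq[OF u']]
  show "op_app (opow ann l) u \<in> hdom Lam m" using sL(1) hm by simp
  have "hnorm Lam m (op_app (opow ann l) u) = sqrt (En (\<lambda>n. lam l n ^ m) (op_app (opow ann l) u))"
    using hdom_char sL(1) by blast
  also have "\<dots> \<le> sqrt (En (\<lambda>n. lam l n ^ m * qf l n) u)" using sL(2) by simp
  also have "\<dots> \<le> sqrt (En (\<lambda>n. lam l n ^ (m+1)) u)"
    by (rule real_sqrt_le_mono, rule En_mono[OF lamq_le wq[OF u'] u'])
  also have "\<dots> = 1 * hnorm Lam (m + 1) u" using hdom_char u' by simp
  finally show "hnorm Lam m (op_app (opow ann l) u) \<le> 1 * hnorm Lam (m + 1) u" .
qed


lemma ineq:
  assumes u6: "u \<in> hdom Lam 6"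
  shows "2 * Re (inner2 (op_app (opow Lam 2) (op_app (op_scale (-1/2) Q) u)) (op_app (opow Lam 2) u))
          + (nrm (op_app (opow Lam 2) (op_app (opow ann l) u)))\<^sup>2 \<le> 0"
proof -
  have u: "u \<in> Wd (\<lambda>n. lam l n ^ 6)" using u6 hdom_char by blast
  have uD: "u \<in> Dd (qf l)" unfolding Dd_eq_W by (rule W_mono[OF _ u]) simp
  have u4: "u \<in> Wd (\<lambda>n. lam l n ^ (2*2))" by (rule W_mono[OF _ u]) simp
  define g where "g n = - (1/2) * qf l n" for n
  have Gu: "op_app (op_scale (-1/2) Q) u = mulv g u"
    using Qapp uD by (simp add: op_scale_def mulv_def g_def fun_eq_iff)
  have lq4: "u \<in> Wd (\<lambda>n. lam l n ^ 4 * qf l n)"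
  proof (rule Wd_mono[OF _ _ u, of _ 1])
    fix n
    show "0 \<le> lam l n ^ 4 * qf l n" using lam_pow_nonneg qf_nonneg by simp
    have "lam l n ^ 4 * qf l n \<le> lam l n ^ (4+1)" by (rule lamq_le)
    also have "\<dots> \<le> lam l n ^ 6" by (rule lam_pow_mono) simp
    finally show "lam l n ^ 4 * qf l n \<le> 1 * lam l n ^ 6" by simp
  qed
  have gW: "mulv g u \<in> Wd (\<lambda>n. lam l n ^ (2*2))" unfolding mulv_Wd
  proof (rule Wd_mono[OF _ _ u, of _ 1])
    fix n
    have "(g n)\<^sup>2 \<le> (lam l n)\<^sup>2" unfolding g_def
      using qf_nonneg[of l n] qf_le_lam[of l n] by (simp add: power_mono power_mult_distrib)
    then have "lam l n ^ (2*2) * (g n)\<^sup>2 \<le> lam l n ^ (2*2) * (lam l n)\<^sup>2"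
      by (rule mult_left_mono) (rule lam_pow_nonneg)
    then show "lam l n ^ (2*2) * (g n)\<^sup>2 \<le> 1 * lam l n ^ 6" by (simp add: power_add[symmetric])
    show "0 \<le> lam l n ^ (2*2) * (g n)\<^sup>2" using lam_pow_nonneg by simp
  qed
  have A1: "op_app (opow Lam 2) (mulv g u) = mulv (\<lambda>n. lam l n ^ 2) (mulv g u)"
    using Lampow[of 2] gW by simp
  have A2: "op_app (opow Lam 2) u = mulv (\<lambda>n. lam l n ^ 2) u"
    using Lampow[of 2] u4 by simp
  have sm: "summable (\<lambda>n. lam l n ^ 2 * g n * lam l n ^ 2 * (cmod (u n))\<^sup>2)"
  proof -
    have "summable (\<lambda>n. (- (1/2)) * (lam l n ^ 4 * qf l n * (cmod (u n))\<^sup>2))"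
      using lq4 unfolding Wd_iff by (rule summable_mult)
    moreover have "(\<lambda>n. (- (1/2)) * (lam l n ^ 4 * qf l n * (cmod (u n))\<^sup>2)) =
        (\<lambda>n. lam l n ^ 2 * g n * lam l n ^ 2 * (cmod (u n))\<^sup>2)"
      unfolding g_def by (simp add: fun_eq_iff power_add[symmetric] algebra_simps)
    ultimately show ?thesis by simp
  qed
  have "Re (inner2 (op_app (opow Lam 2) (op_app (op_scale (-1/2) Q) u)) (op_app (opow Lam 2) u))
      = (\<Sum>n. lam l n ^ 2 * g n * lam l n ^ 2 * (cmod (u n))\<^sup>2)"
    unfolding Gu A1 A2 mulv_mulv using re_inner_mulv[OF sm[unfolded mult.assoc[symmetric]]]
    by (simp add: mult.assoc)
  also have "\<dots> = (\<Sum>n. (- (1/2)) * (lam l n ^ 4 * qf l n * (cmod (u n))\<^sup>2))"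
    unfolding g_def by (rule arg_cong[where f=suminf]) (simp add: fun_eq_iff power_add[symmetric] algebra_simps)
  also have "\<dots> = - (1/2) * En (\<lambda>n. lam l n ^ 4 * qf l n) u"
    unfolding En_def using lq4 unfolding Wd_iff by (rule suminf_mult)
  finally have R: "2 * Re (inner2 (op_app (opow Lam 2) (op_app (op_scale (-1/2) Q) u)) (op_app (opow Lam 2) u))
      = - En (\<lambda>n. lam l n ^ 4 * qf l n) u" by simp
  have wm: "\<And>n n'. n \<le> n' \<Longrightarrow> lam l n ^ 4 \<le> lam l n' ^ 4"
    using lam_mono lam_pos by (simp add: power_mono less_imp_le)
  note sL = shiftL[OF lam_pow_nonneg wm lq4]
  have Lu4: "op_app (opow ann l) u \<in> Wd (\<lambda>n. lam l n ^ (2*2))" using sL(1) by simp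
  have "op_app (opow Lam 2) (op_app (opow ann l) u) = mulv (\<lambda>n. lam l n ^ 2) (op_app (opow ann l) u)"
    using Lampow[of 2] Lu4 by simp
  then have "(nrm (op_app (opow Lam 2) (op_app (opow ann l) u)))\<^sup>2 = En (\<lambda>n. lam l n ^ 4) (op_app (opow ann l) u)"
    using En_nonneg[OF lam_pow_nonneg sL(1)]
    by (simp add: nrm_mulv power_mult[symmetric])
  then show ?thesis using R sL(2) by simp
qed

end



theorem mainTheorem12:
  fixes l :: nat
  assumes "l \<ge> 1"
  shows "let L = opow ann l;
             Q = op_closure (op_comp (adjoint L) L);
             G = op_scale (-1/2) Q;
             Lam = op_add op_id Q
         in (\<forall>k. hdom Lam k = {\<psi>. summable (\<lambda>m. (1 + real m ^ (k * l)) * (cmod (\<psi> m))\<^sup>2)})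
          \<and> selfadjoint (hdom Lam 2, op_app (op_comp (opow cre l) (opow ann l)))
          \<and> (\<forall>m. bounded_between Lam (m + 1) m L)
          \<and> (\<forall>u\<in>hdom Lam 6.
               2 * Re (inner2 (op_app (opow Lam 2) (op_app G u)) (op_app (opow Lam 2) u))
               + (nrm (op_app (opow Lam 2) (op_app L u)))\<^sup>2 \<le> 0)
          \<and> assumptionA [L] 0"
proof -
  define L where "L = opow ann l"
  define Q where "Q = op_closure (op_comp (adjoint L) L)"
  have LLd: "op_dom (op_comp (adjoint L) L) = Dd (qf l)" unfolding L_def by (rule LL_dom)
  have LLa: "\<forall>u\<in>op_dom (op_comp (adjoint L) L). op_app (op_comp (adjoint L) L) u = mulv (qf l) u"
    using LL_app[of _ l] LLd unfolding L_def by simp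
  note cl = closure_diag[OF LLd LLa]
  interpret A: QL l Q using cl unfolding Q_def by unfold_locales auto
  define LL where "LL = op_sum (map (\<lambda>L. op_comp (adjoint L) L) [L])"
  have LLd2: "op_dom LL = Dd (qf l)"
    unfolding LL_def op_sum_def using LLd by (auto simp: Dd_def)
  have LLa2: "\<forall>u\<in>op_dom LL. op_app LL u = mulv (qf l) u"
    unfolding LL_def op_sum_def using LLd LLa by (auto simp: Dd_def)
  note cl2 = closure_diag[OF LLd2 LLa2]
  define Q2 where "Q2 = op_closure LL"
  interpret B: QL l Q2 using cl2 unfolding Q2_def by unfold_locales auto
  have h2: "hdom A.Lam 2 = Dd (qf l)" using A.hdom_char[of 2] Dd_eq_W by simp
  have sa: "selfadjoint (hdom A.Lam 2, op_app (op_comp (opow cre l) (opow ann l)))"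
    by (rule selfadjoint_diag[where d="qf l"]) (use h2 creann_app in auto)
  have sLL: "selfadjoint LL" by (rule selfadjoint_diag[OF LLd2 LLa2])
  have sQ2: "selfadjoint Q2" unfolding Q2_def by (rule selfadjoint_diag[OF cl2(1)]) (use cl2 in simp)
  have dLL: "dense_l2 (op_dom LL)" using sLL unfolding selfadjoint_def by blast
  have clL: "closed_op L" unfolding L_def by (rule closedL)
  have assmA: "assumptionA [L] 0"
    unfolding assumptionA_def Let_def LL_def[symmetric] Q2_def[symmetric] B.Lam_def[symmetric]
  proof (intro conjI)
    show "\<forall>L\<in>set [L]. closed_op L" using clL by simp
    show "dense_l2 (op_dom LL)" by (rule dLL)
    show "ess_selfadjoint LL" unfolding ess_selfadjoint_def using dLL sQ2 Q2_def by simp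
    show "\<forall>L\<in>set [L]. bounded_between B.Lam 5 4 L" using B.bounded_L[of 4] unfolding L_def by simp
    show "(0::real) \<le> 0" by simp
    show "\<forall>u\<in>hdom B.Lam 6.
       2 * Re (inner2 (op_app (opow B.Lam 2) (op_app (op_scale (- 1 / 2) Q2) u)) (op_app (opow B.Lam 2) u)) +
       (\<Sum>L\<leftarrow>[L]. (nrm (op_app (opow B.Lam 2) (op_app L u)))\<^sup>2)
       \<le> 0 * (nrm (op_app (opow B.Lam 2) u))\<^sup>2"
      using B.ineq unfolding L_def by simp
  qed
  show ?thesis
    unfolding Let_def L_def[symmetric] Q_def[symmetric] A.Lam_def[symmetric]
  proof (intro conjI)
    show "\<forall>k. hdom A.Lam k = {\<psi>. summable (\<lambda>m. (1 + real m ^ (k * l)) * (cmod (\<psi> m))\<^sup>2)}"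
      using A.hdom_char W_weight by blast
    show "selfadjoint (hdom A.Lam 2, op_app (op_comp (opow cre l) L))" using sa unfolding L_def .
    show "\<forall>m. bounded_between A.Lam (m + 1) m L" using A.bounded_L unfolding L_def by blast
    show "\<forall>u\<in>hdom A.Lam 6.
       2 * Re (inner2 (op_app (opow A.Lam 2) (op_app (op_scale (- 1 / 2) Q) u)) (op_app (opow A.Lam 2) u)) +
       (nrm (op_app (opow A.Lam 2) (op_app L u)))\<^sup>2 \<le> 0"
      using A.ineq unfolding L_def by blast
    show "assumptionA [L] 0" by (rule assmA)
  qed
qed


end
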